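(* Let $(X,T)$ be a topological dynamical system, $f\in C(X,\mathbb{R})$, and $(K_n)_{n\ge1}$ a sequence of nonempty closed subsets of $X$. Then $$\lim_{\delta\to0}\limsup_{n\to+\infty}\frac1n\log P_n(T,f,\delta,K_n)=\sup_{\mathcal{U}\in\mathcal{C}_X^o}\limsup_{n\to+\infty}\frac1n\log P_n(T,f,\mathcal{U},K_n).$$
   Context: A TDS is a compact metric space $(X,d)$ with a homeomorphism $T$. $f_n=\sum_{i=0}^{n-1}f\circ T^i$, $d_n(x,y)=\max_{0\le i<n}d(T^ix,T^iy)$, and $P_n(T,f,\delta,K)=\sup\{\sum_{x\in E}\exp f_n(x): E\subseteq K,\ d_n(x,y)>\delta\text{ for distinct }x,y\in E\}$. $\mathcal{C}_X$ is the set of finite Borel covers of $X$, $\mathcal{C}_X^o$ the set of finite open covers; $\mathcal{V}\succeq\mathcal{U}$ means each element of $\mathcal{V}$ lies in some element of $\mathcal{U}$; $\mathcal{U}_0^{n-1}=\bigvee_{i=0}^{n-1}T^{-i}\mathcal{U}$. $P_n(T,f,\mathcal{U},K)=\inf\{\sum_{V\in\mathcal{V}}\sup_{x\in V\cap K}\exp f_n(x):\mathcal{V}\in\mathcal{C}_X,\ \mathcal{V}\succeq\mathcal{U}_0^{n-1}\}$, terms with $V\cap K=\emptyset$ contributing $0$. *)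

theory Defs
  imports "HOL-Analysis.Analysis"
begin

definition birkhoff_sum :: "('a \<Rightarrow> 'a) \<Rightarrow> ('a \<Rightarrow> real) \<Rightarrow> nat \<Rightarrow> 'a \<Rightarrow> real" where
  "birkhoff_sum T f n x = (\<Sum>i<n. f ((T ^^ i) x))"

text \<open>Bowen metric d_n(x,y) = max_{0<=i<n} d(T^i x, T^i y) (relevant for n >= 1).\<close>
definition bowen_dist :: "('a::metric_space \<Rightarrow> 'a) \<Rightarrow> nat \<Rightarrow> 'a \<Rightarrow> 'a \<Rightarrow> real" where
  "bowen_dist T n x y = Max ((\<lambda>i. dist ((T ^^ i) x) ((T ^^ i) y)) ` {..<n})"

definition sep_pressure ::
  "('a::metric_space \<Rightarrow> 'a) \<Rightarrow> ('a \<Rightarrow> real) \<Rightarrow> nat \<Rightarrow> real \<Rightarrow> 'a set \<Rightarrow> real" where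
  "sep_pressure T f n \<delta> K =
     Sup {(\<Sum>x\<in>E. exp (birkhoff_sum T f n x)) | E.
            finite E \<and> E \<subseteq> K \<and>
            (\<forall>x\<in>E. \<forall>y\<in>E. x \<noteq> y \<longrightarrow> bowen_dist T n x y > \<delta>)}"

definition borel_covers :: "'a::topological_space set \<Rightarrow> 'a set set set" where
  "borel_covers X = {\<V>. finite \<V> \<and> (\<forall>V\<in>\<V>. V \<in> sets borel \<and> V \<subseteq> X) \<and> \<Union>\<V> = X}"

definition open_covers :: "'a::topological_space set \<Rightarrow> 'a set set set" where
  "open_covers X = {\<U>. finite \<U> \<and> (\<forall>U\<in>\<U>. openin (top_of_set X) U) \<and> \<Union>\<U> = X}"

definition refines :: "'a set set \<Rightarrow> 'a set set \<Rightarrow> bool" where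
  "refines \<V> \<U> \<longleftrightarrow> (\<forall>V\<in>\<V>. \<exists>U\<in>\<U>. V \<subseteq> U)"

definition join_cover :: "'a set \<Rightarrow> ('a \<Rightarrow> 'a) \<Rightarrow> 'a set set \<Rightarrow> nat \<Rightarrow> 'a set set" where
  "join_cover X T \<U> n = {X \<inter> (\<Inter>i<n. (T ^^ i) -` W i) | W. \<forall>i<n. W i \<in> \<U>}"

definition cover_pressure ::
  "'a::topological_space set \<Rightarrow> ('a \<Rightarrow> 'a) \<Rightarrow> ('a \<Rightarrow> real) \<Rightarrow> nat \<Rightarrow> 'a set set \<Rightarrow> 'a set \<Rightarrow> real" where
  "cover_pressure X T f n \<U> K =
     Inf {(\<Sum>V\<in>\<V>. (if V \<inter> K = {} then 0
                     else Sup ((\<lambda>x. exp (birkhoff_sum T f n x)) ` (V \<inter> K)))) | \<V>.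
            \<V> \<in> borel_covers X \<and> refines \<V> (join_cover X T \<U> n)}"

end

theory Submission
  imports Defs
begin


locale tds =
  fixes X :: "'a::metric_space set" and T :: "'a \<Rightarrow> 'a" and f :: "'a \<Rightarrow> real"
  assumes cX: "compact X" and TX: "\<And>x. x \<in> X \<Longrightarrow> T x \<in> X"
    and cT: "continuous_on X T" and cf: "continuous_on X f"
begin

lemma closedX: "closed X" using cX compact_imp_closed by blast

lemma Tn_in: "x \<in> X \<Longrightarrow> (T ^^ i) x \<in> X"
  by (induction i) (auto intro: TX)

lemma Tn_cont: "continuous_on X (T ^^ i)"
proof (induction i)
  case 0 then show ?case by (simp add: continuous_on_id)
next
  case (Suc i)
  have "T ^^ Suc i = T ^^ i \<circ> T" by (rule funpow_Suc_right)
  moreover have "continuous_on X (T ^^ i \<circ> T)"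
  proof (rule continuous_on_compose[OF cT])
    show "continuous_on (T ` X) (T ^^ i)" using continuous_on_subset[OF Suc] TX by blast
  qed
  ultimately show ?case by simp
qed

lemma f_bound: obtains M where "\<And>x. x \<in> X \<Longrightarrow> \<bar>f x\<bar> \<le> M"
proof -
  have "compact (f ` X)" using compact_continuous_image[OF cf cX] .
  then have "bounded (f ` X)" by (rule compact_imp_bounded)
  then obtain M where "\<forall>y\<in>f ` X. norm y \<le> M" using bounded_iff by blast
  then show ?thesis using that by auto
qed

lemma bs_bound: obtains M where "\<And>x n. x \<in> X \<Longrightarrow> \<bar>birkhoff_sum T f n x\<bar> \<le> real n * M"
proof -
  obtain M where M: "\<And>x. x \<in> X \<Longrightarrow> \<bar>f x\<bar> \<le> M" using f_bound by blast
  have "\<bar>birkhoff_sum T f n x\<bar> \<le> real n * M" if "x \<in> X" for x n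
  proof -
    have "\<bar>birkhoff_sum T f n x\<bar> \<le> (\<Sum>i<n. \<bar>f ((T ^^ i) x)\<bar>)"
      unfolding birkhoff_sum_def by (rule sum_abs)
    also have "\<dots> \<le> (\<Sum>i<n. M)" by (rule sum_mono) (auto intro: M Tn_in that)
    finally show ?thesis by simp
  qed
  then show ?thesis using that by blast
qed

lemma bowen_le_iff:
  assumes "n \<ge> 1"
  shows "bowen_dist T n x y \<le> \<delta> \<longleftrightarrow> (\<forall>i<n. dist ((T ^^ i) x) ((T ^^ i) y) \<le> \<delta>)"
  proof -
  have "0 \<in> {..<n}" using assms by simp
  then have "{..<n} \<noteq> {}" by blast
  then show ?thesis unfolding bowen_dist_def by (subst Max_le_iff) auto
qed

lemma bowen_sym: "bowen_dist T n x y = bowen_dist T n y x"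
  unfolding bowen_dist_def by (simp add: dist_commute)

lemma preimage_openin:
  assumes "openin (top_of_set X) W"
  shows "openin (top_of_set X) (X \<inter> (T ^^ i) -` W)"
  using continuous_openin_preimage[OF Tn_cont _ assms, of i] Tn_in by blast

lemma openin_borel:
  assumes "openin (top_of_set X) W" shows "W \<in> sets borel"
proof -
  obtain Op where "open Op" "W = X \<inter> Op" using assms openin_open by blast
  then show ?thesis using closedX by (auto intro: borel_closed borel_open)
qed

lemma join_props:
  assumes U: "U \<in> open_covers X" and J: "J \<in> join_cover X T U n"
  shows "openin (top_of_set X) J" "J \<in> sets borel" "J \<subseteq> X"
proof -
  obtain W where W: "\<forall>i<n. W i \<in> U" and Jd: "J = X \<inter> (\<Inter>i<n. (T ^^ i) -` W i)"
    using J unfolding join_cover_def by blast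
  have eq: "J = (\<Inter>i\<in>{..<n}. X \<inter> (T ^^ i) -` W i) \<inter> topspace (top_of_set X)" using Jd by auto
  have "openin (top_of_set X) ((\<Inter>i\<in>{..<n}. X \<inter> (T ^^ i) -` W i) \<inter> topspace (top_of_set X))"
    apply (rule openin_INT) using W U
    by (auto simp: open_covers_def intro!: preimage_openin)
  then show o: "openin (top_of_set X) J" using eq by simp
  then show "J \<in> sets borel" by (rule openin_borel)
  show "J \<subseteq> X" using Jd by auto
qed

lemma join_union:
  assumes U: "U \<in> open_covers X"
  shows "\<Union>(join_cover X T U n) = X"
proof
  show "\<Union>(join_cover X T U n) \<subseteq> X" unfolding join_cover_def by auto
  show "X \<subseteq> \<Union>(join_cover X T U n)"
  proof
    fix x assume x: "x \<in> X"
    have "\<forall>i. \<exists>W\<in>U. (T ^^ i) x \<in> W" using U Tn_in[OF x] unfolding open_covers_def by blast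
    then obtain W where W: "\<And>i. W i \<in> U \<and> (T ^^ i) x \<in> W i" by metis
    have "X \<inter> (\<Inter>i<n. (T ^^ i) -` W i) \<in> join_cover X T U n"
      unfolding join_cover_def using W by blast
    moreover have "x \<in> X \<inter> (\<Inter>i<n. (T ^^ i) -` W i)" using W x by auto
    ultimately show "x \<in> \<Union>(join_cover X T U n)" by blast
  qed
qed

lemma join_finite:
  assumes U: "U \<in> open_covers X"
  shows "finite (join_cover X T U n)"
proof -
  have "join_cover X T U n \<subseteq> (\<lambda>W. X \<inter> (\<Inter>i<n. (T ^^ i) -` W i)) ` (PiE {..<n} (\<lambda>_. U))"
  proof
    fix J assume "J \<in> join_cover X T U n"
    then obtain W where W: "\<forall>i<n. W i \<in> U" and Jd: "J = X \<inter> (\<Inter>i<n. (T ^^ i) -` W i)"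
      unfolding join_cover_def by blast
    have "restrict W {..<n} \<in> PiE {..<n} (\<lambda>_. U)" using W by auto
    moreover have "J = X \<inter> (\<Inter>i<n. (T ^^ i) -` (restrict W {..<n}) i)" using Jd by auto
    ultimately show "J \<in> (\<lambda>W. X \<inter> (\<Inter>i<n. (T ^^ i) -` W i)) ` (PiE {..<n} (\<lambda>_. U))" by blast
  qed
  moreover have "finite (PiE {..<n} (\<lambda>_. U))" using U by (intro finite_PiE) (auto simp: open_covers_def)
  ultimately show ?thesis by (meson finite_imageI finite_subset)
qed

lemma join_borel_cover:
  assumes U: "U \<in> open_covers X"
  shows "join_cover X T U n \<in> borel_covers X"
  unfolding borel_covers_def using join_finite[OF U] join_union[OF U] join_props[OF U] by blast

lemma ball_cover:
  assumes "\<delta> > 0"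
  shows "\<exists>U\<in>open_covers X. \<forall>W\<in>U. \<forall>y\<in>W. \<forall>z\<in>W. dist y z \<le> \<delta>"
proof -
  have "X \<subseteq> \<Union>((\<lambda>x. ball x (\<delta>/2)) ` X)" using assms by auto
  then obtain D where D: "D \<subseteq> X" "finite D" "X \<subseteq> \<Union>((\<lambda>x. ball x (\<delta>/2)) ` D)"
    using compactE_image[OF cX, of X "\<lambda>x. ball x (\<delta>/2)"] by auto
  define U where "U = (\<lambda>x. X \<inter> ball x (\<delta>/2)) ` D"
  have "U \<in> open_covers X" unfolding open_covers_def U_def using D
    by (auto intro: openin_open_Int)
  moreover have "\<forall>W\<in>U. \<forall>y\<in>W. \<forall>z\<in>W. dist y z \<le> \<delta>"
  proof (intro ballI)
    fix W y z assume "W \<in> U" "y \<in> W" "z \<in> W"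
    then obtain x where "dist x y < \<delta>/2" "dist x z < \<delta>/2" by (auto simp: U_def)
    then show "dist y z \<le> \<delta>" using dist_triangle[of y z x] by (simp add: dist_commute)
  qed
  ultimately show ?thesis by blast
qed

end



context tds begin

definition gv :: "nat \<Rightarrow> 'a set \<Rightarrow> 'a set \<Rightarrow> real" where
  "gv n K V = (if V \<inter> K = {} then 0 else Sup ((\<lambda>x. exp (birkhoff_sum T f n x)) ` (V \<inter> K)))"

definition sepset :: "nat \<Rightarrow> real \<Rightarrow> 'a set \<Rightarrow> real set" where
  "sepset n \<delta> K = {(\<Sum>x\<in>E. exp (birkhoff_sum T f n x)) | E.
            finite E \<and> E \<subseteq> K \<and>
            (\<forall>x\<in>E. \<forall>y\<in>E. x \<noteq> y \<longrightarrow> bowen_dist T n x y > \<delta>)}"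

lemma sep_eq: "sep_pressure T f n \<delta> K = Sup (sepset n \<delta> K)"
  unfolding sep_pressure_def sepset_def ..

lemma cov_eq: "cover_pressure X T f n U K =
   Inf {sum (gv n K) \<V> | \<V>. \<V> \<in> borel_covers X \<and> refines \<V> (join_cover X T U n)}"
  unfolding cover_pressure_def gv_def ..

lemma gv_bdd:
  assumes "V \<subseteq> X" shows "bdd_above ((\<lambda>x. exp (birkhoff_sum T f n x)) ` (V \<inter> K))"
proof -
  obtain M where M: "\<And>x n. x \<in> X \<Longrightarrow> \<bar>birkhoff_sum T f n x\<bar> \<le> real n * M" using bs_bound by blast
  show ?thesis
  proof (rule bdd_aboveI2)
    fix x assume "x \<in> V \<inter> K"
    then have "birkhoff_sum T f n x \<le> real n * M" using M[of x n] assms by auto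
    then show "exp (birkhoff_sum T f n x) \<le> exp (real n * M)" by simp
  qed
qed

lemma gv_nonneg:
  assumes "V \<subseteq> X" shows "gv n K V \<ge> 0"
proof (cases "V \<inter> K = {}")
  case False
  then obtain x where x: "x \<in> V \<inter> K" by blast
  have "0 \<le> exp (birkhoff_sum T f n x)" by simp
  also have "\<dots> \<le> Sup ((\<lambda>x. exp (birkhoff_sum T f n x)) ` (V \<inter> K))"
    using gv_bdd[OF assms] x by (intro cSup_upper) auto
  finally show ?thesis using False by (simp add: gv_def)
qed (simp add: gv_def)

lemma gv_ge:
  assumes "V \<subseteq> X" "x \<in> V" "x \<in> K"
  shows "exp (birkhoff_sum T f n x) \<le> gv n K V"
proof -
  have "V \<inter> K \<noteq> {}" using assms by blast
  then show ?thesis unfolding gv_def using assms gv_bdd[OF assms(1), of n K]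
    by (auto intro: cSup_upper)
qed

lemma join_small:
  assumes U: "\<forall>W\<in>U. \<forall>y\<in>W. \<forall>z\<in>W. dist y z \<le> \<delta>" and n: "n \<ge> 1"
    and J: "J \<in> join_cover X T U n" and y: "y \<in> J" and z: "z \<in> J"
  shows "bowen_dist T n y z \<le> \<delta>"
proof -
  obtain W where W: "\<forall>i<n. W i \<in> U" and Jd: "J = X \<inter> (\<Inter>i<n. (T ^^ i) -` W i)"
    using J unfolding join_cover_def by blast
  show ?thesis unfolding bowen_le_iff[OF n]
    using W Jd y z U by blast
qed

lemma sep_card:
  assumes U: "U \<in> open_covers X" "\<forall>W\<in>U. \<forall>y\<in>W. \<forall>z\<in>W. dist y z \<le> \<delta>" and n: "n \<ge> 1"
    and E: "E \<subseteq> X" "\<forall>x\<in>E. \<forall>y\<in>E. x \<noteq> y \<longrightarrow> bowen_dist T n x y > \<delta>"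
  shows "card E \<le> card (join_cover X T U n)"
proof -
  have "\<forall>x\<in>E. \<exists>J\<in>join_cover X T U n. x \<in> J" using join_union[OF U(1), of n] E by blast
  then obtain \<phi> where \<phi>: "\<And>x. x \<in> E \<Longrightarrow> \<phi> x \<in> join_cover X T U n \<and> x \<in> \<phi> x" by metis
  have "inj_on \<phi> E"
  proof (rule inj_onI)
    fix x y assume "x \<in> E" "y \<in> E" "\<phi> x = \<phi> y"
    then have "bowen_dist T n x y \<le> \<delta>" using join_small[OF U(2) n, of "\<phi> x" x y] \<phi>[of x] \<phi>[of y] by auto
    then show "x = y" using E(2) \<open>x \<in> E\<close> \<open>y \<in> E\<close> by (meson not_le)
  qed
  then show ?thesis using \<phi> join_finite[OF U(1)] by (intro card_inj_on_le) auto
qed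

lemma sep_bdd:
  assumes d: "\<delta> > 0" and n: "n \<ge> 1" and K: "K \<subseteq> X"
  shows "bdd_above (sepset n \<delta> K)"
proof -
  obtain U where U: "U \<in> open_covers X" "\<forall>W\<in>U. \<forall>y\<in>W. \<forall>z\<in>W. dist y z \<le> \<delta>"
    using ball_cover[OF d] by blast
  obtain M where M: "\<And>x n. x \<in> X \<Longrightarrow> \<bar>birkhoff_sum T f n x\<bar> \<le> real n * M" using bs_bound by blast
  define N where "N = card (join_cover X T U n)"
  show ?thesis unfolding sepset_def
  proof (rule bdd_aboveI, clarify)
    fix E assume E: "finite E" "E \<subseteq> K" "\<forall>x\<in>E. \<forall>y\<in>E. x \<noteq> y \<longrightarrow> \<delta> < bowen_dist T n x y"
    have "(\<Sum>x\<in>E. exp (birkhoff_sum T f n x)) \<le> (\<Sum>x\<in>E. exp (real n * M))"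
    proof (rule sum_mono)
      fix x assume "x \<in> E"
      then have "birkhoff_sum T f n x \<le> real n * M" using M[of x n] E K by auto
      then show "exp (birkhoff_sum T f n x) \<le> exp (real n * M)" by simp
    qed
    also have "\<dots> = real (card E) * exp (real n * M)" by simp
    also have "\<dots> \<le> real N * exp (real n * M)"
      using sep_card[OF U n, of E] E K unfolding N_def by (intro mult_right_mono) auto
    finally show "(\<Sum>x\<in>E. exp (birkhoff_sum T f n x)) \<le> real N * exp (real n * M)" .
  qed
qed

lemma sepset_ne: "sepset n \<delta> K \<noteq> {}"
proof -
  have "0 \<in> sepset n \<delta> K" unfolding sepset_def mem_Collect_eq
    by (rule exI[of _ "{}"]) simp
  then show ?thesis by blast
qed

lemma sepset_iff: "s \<in> sepset n \<delta> K \<longleftrightarrow> (\<exists>E. s = (\<Sum>x\<in>E. exp (birkhoff_sum T f n x)) \<and> finite E \<and> E \<subseteq> K \<and>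
            (\<forall>x\<in>E. \<forall>y\<in>E. x \<noteq> y \<longrightarrow> bowen_dist T n x y > \<delta>))"
  unfolding sepset_def by (rule mem_Collect_eq)

lemma sep_upper:
  assumes d: "\<delta> > 0" and n: "n \<ge> 1" and K: "K \<subseteq> X"
    and E: "finite E" "E \<subseteq> K" "\<forall>x\<in>E. \<forall>y\<in>E. x \<noteq> y \<longrightarrow> bowen_dist T n x y > \<delta>"
  shows "(\<Sum>x\<in>E. exp (birkhoff_sum T f n x)) \<le> sep_pressure T f n \<delta> K"
proof -
  have "(\<Sum>x\<in>E. exp (birkhoff_sum T f n x)) \<in> sepset n \<delta> K"
    unfolding sepset_def using E by blast
  then show ?thesis unfolding sep_eq by (intro cSup_upper sep_bdd[OF d n K])
qed

lemma sep_pos: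
  assumes d: "\<delta> > 0" and n: "n \<ge> 1" and K: "K \<subseteq> X" and x0: "x0 \<in> K"
  shows "sep_pressure T f n \<delta> K > 0"
proof -
  have "0 < (\<Sum>x\<in>{x0}. exp (birkhoff_sum T f n x))" by simp
  also have "\<dots> \<le> sep_pressure T f n \<delta> K" using x0 by (intro sep_upper[OF d n K]) simp_all
  finally show ?thesis .
qed

lemma sep_mono:
  assumes d: "0 < \<delta>1" "\<delta>1 \<le> \<delta>2" and n: "n \<ge> 1" and K: "K \<subseteq> X"
  shows "sep_pressure T f n \<delta>2 K \<le> sep_pressure T f n \<delta>1 K"
  unfolding sep_eq[of n \<delta>2]
proof (rule cSup_least)
  show "sepset n \<delta>2 K \<noteq> {}" by (rule sepset_ne)
  fix s assume "s \<in> sepset n \<delta>2 K"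
  then have "\<exists>E. s = (\<Sum>x\<in>E. exp (birkhoff_sum T f n x)) \<and> finite E \<and> E \<subseteq> K \<and>
            (\<forall>x\<in>E. \<forall>y\<in>E. x \<noteq> y \<longrightarrow> bowen_dist T n x y > \<delta>2)" by (simp only: sepset_iff)
  then obtain E where E0: "s = (\<Sum>x\<in>E. exp (birkhoff_sum T f n x)) \<and> finite E \<and> E \<subseteq> K \<and>
            (\<forall>x\<in>E. \<forall>y\<in>E. x \<noteq> y \<longrightarrow> bowen_dist T n x y > \<delta>2)" ..
  then have E: "finite E" "E \<subseteq> K" "\<forall>x\<in>E. \<forall>y\<in>E. x \<noteq> y \<longrightarrow> bowen_dist T n x y > \<delta>2"
    and s: "s = (\<Sum>x\<in>E. exp (birkhoff_sum T f n x))" by blast+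
  have E3: "\<forall>x\<in>E. \<forall>y\<in>E. x \<noteq> y \<longrightarrow> bowen_dist T n x y > \<delta>1"
  proof (intro ballI impI)
    fix x y assume "x \<in> E" "y \<in> E" "x \<noteq> y"
    then have "\<delta>2 < bowen_dist T n x y" using E(3) by blast
    then show "\<delta>1 < bowen_dist T n x y" using d(2) by linarith
  qed
  show "s \<le> sep_pressure T f n \<delta>1 K" unfolding s
    by (rule sep_upper[OF d(1) n K E(1,2) E3])
qed

lemma cover_set_ne:
  assumes U: "U \<in> open_covers X"
  shows "{sum (gv n K) \<V> | \<V>. \<V> \<in> borel_covers X \<and> refines \<V> (join_cover X T U n)} \<noteq> {}"
  using join_borel_cover[OF U, of n] by (auto simp: refines_def)

lemma cover_le:
  assumes "\<V> \<in> borel_covers X" "refines \<V> (join_cover X T U n)"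
  shows "cover_pressure X T f n U K \<le> sum (gv n K) \<V>"
  unfolding cov_eq using assms
proof (intro cInf_lower)
  show "sum (gv n K) \<V> \<in> {sum (gv n K) \<V> | \<V>. \<V> \<in> borel_covers X \<and> refines \<V> (join_cover X T U n)}"
    using assms by blast
  show "bdd_below {sum (gv n K) \<V> | \<V>. \<V> \<in> borel_covers X \<and> refines \<V> (join_cover X T U n)}"
  proof (rule bdd_belowI[where m=0], clarify)
    fix \<W> assume "\<W> \<in> borel_covers X"
    then show "0 \<le> sum (gv n K) \<W>" unfolding borel_covers_def
      by (intro sum_nonneg gv_nonneg) auto
  qed
qed

lemma cover_pos:
  assumes U: "U \<in> open_covers X" and K: "K \<subseteq> X" and x0: "x0 \<in> K"
  shows "cover_pressure X T f n U K > 0"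
proof -
  have "exp (birkhoff_sum T f n x0) \<le> cover_pressure X T f n U K"
    unfolding cov_eq
  proof (rule cInf_greatest[OF cover_set_ne[OF U]], clarify)
    fix \<V> assume V: "\<V> \<in> borel_covers X" "refines \<V> (join_cover X T U n)"
    then obtain V where V0: "V \<in> \<V>" "x0 \<in> V" using x0 K unfolding borel_covers_def by blast
    have "exp (birkhoff_sum T f n x0) \<le> gv n K V"
      using V V0 x0 unfolding borel_covers_def by (intro gv_ge) auto
    also have "\<dots> \<le> sum (gv n K) \<V>" using V V0 unfolding borel_covers_def
      by (intro member_le_sum gv_nonneg) blast+
    finally show "exp (birkhoff_sum T f n x0) \<le> sum (gv n K) \<V>" .
  qed
  then show ?thesis by (meson exp_gt_zero less_le_trans)
qed

lemma sep_le_cover: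
  assumes U: "U \<in> open_covers X" "\<forall>W\<in>U. \<forall>y\<in>W. \<forall>z\<in>W. dist y z \<le> \<delta>" and n: "n \<ge> 1"
    and K: "K \<subseteq> X"
  shows "sep_pressure T f n \<delta> K \<le> cover_pressure X T f n U K"
  unfolding sep_eq
proof (rule cSup_least)
  show "sepset n \<delta> K \<noteq> {}" by (rule sepset_ne)
  fix s assume "s \<in> sepset n \<delta> K"
  then have "\<exists>E. s = (\<Sum>x\<in>E. exp (birkhoff_sum T f n x)) \<and> finite E \<and> E \<subseteq> K \<and>
            (\<forall>x\<in>E. \<forall>y\<in>E. x \<noteq> y \<longrightarrow> bowen_dist T n x y > \<delta>)" by (simp only: sepset_iff)
  then obtain E where E0: "s = (\<Sum>x\<in>E. exp (birkhoff_sum T f n x)) \<and> finite E \<and> E \<subseteq> K \<and>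
            (\<forall>x\<in>E. \<forall>y\<in>E. x \<noteq> y \<longrightarrow> bowen_dist T n x y > \<delta>)" ..
  then have E: "finite E" "E \<subseteq> K" "\<forall>x\<in>E. \<forall>y\<in>E. x \<noteq> y \<longrightarrow> bowen_dist T n x y > \<delta>"
    and s: "s = (\<Sum>x\<in>E. exp (birkhoff_sum T f n x))" by blast+
  show "s \<le> cover_pressure X T f n U K" unfolding cov_eq
  proof (rule cInf_greatest[OF cover_set_ne[OF U(1)]], clarify)
    fix \<V> assume V: "\<V> \<in> borel_covers X" "refines \<V> (join_cover X T U n)"
    have Vfin: "finite \<V>" and VX: "\<And>V. V \<in> \<V> \<Longrightarrow> V \<subseteq> X" and Vu: "\<Union>\<V> = X"
      using V(1) unfolding borel_covers_def by auto
    have "\<forall>x\<in>E. \<exists>V\<in>\<V>. x \<in> V" using E K Vu by blast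
    then obtain \<phi> where \<phi>: "\<And>x. x \<in> E \<Longrightarrow> \<phi> x \<in> \<V> \<and> x \<in> \<phi> x" by metis
    have inj: "inj_on \<phi> E"
    proof (rule inj_onI)
      fix x y assume xy: "x \<in> E" "y \<in> E" "\<phi> x = \<phi> y"
      then obtain J where "J \<in> join_cover X T U n" "\<phi> x \<subseteq> J"
        using V(2) \<phi> unfolding refines_def by blast
      then have "bowen_dist T n x y \<le> \<delta>" using join_small[OF U(2) n, of J x y] \<phi>[of x] \<phi>[of y] xy by auto
      then show "x = y" using E(3) xy by (meson not_le)
    qed
    have "s \<le> (\<Sum>x\<in>E. gv n K (\<phi> x))" unfolding s
      using \<phi> E K by (intro sum_mono gv_ge VX) auto
    also have "\<dots> = sum (gv n K) (\<phi> ` E)" using sum.reindex[OF inj, of "gv n K"] by (simp add: o_def)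
    also have "\<dots> \<le> sum (gv n K) \<V>" using \<phi> Vfin VX
      by (intro sum_mono2 gv_nonneg) blast+
    finally show "s \<le> sum (gv n K) \<V>" .
  qed
qed

end



context tds begin

lemma bowen_self: "n \<ge> 1 \<Longrightarrow> \<delta> \<ge> 0 \<Longrightarrow> bowen_dist T n x x \<le> \<delta>"
  by (simp add: bowen_le_iff)

lemma diam_le:
  assumes "\<And>y z. y \<in> S \<Longrightarrow> z \<in> S \<Longrightarrow> dist y z \<le> d" "d \<ge> 0"
  shows "diameter S \<le> d"
proof (cases "S = {}")
  case False
  then have "(SUP (x,y)\<in>S\<times>S. dist x y) \<le> d"
    using assms by (intro cSUP_least) auto
  then show ?thesis using False by (simp add: diameter_def)
qed (simp add: diameter_def assms)

lemma cover_le_sep: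
  assumes U: "U \<in> open_covers X" and leb: "\<And>S. S \<subseteq> X \<Longrightarrow> diameter S < lam \<Longrightarrow> \<exists>W\<in>U. S \<subseteq> W"
    and uc: "\<And>x y. x \<in> X \<Longrightarrow> y \<in> X \<Longrightarrow> dist x y \<le> \<delta> \<Longrightarrow> \<bar>f x - f y\<bar> \<le> \<epsilon>"
    and d: "\<delta> > 0" "2 * \<delta> < lam" and n: "n \<ge> 1" and K: "K \<subseteq> X" "closed K"
  shows "cover_pressure X T f n U K \<le> exp (real n * \<epsilon>) * sep_pressure T f n \<delta> K"
proof -
  obtain U' where U': "U' \<in> open_covers X" "\<forall>W\<in>U'. \<forall>y\<in>W. \<forall>z\<in>W. dist y z \<le> \<delta>"
    using ball_cover[OF d(1)] by blast
  define N where "N = card (join_cover X T U' n)"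
  define P where "P E \<longleftrightarrow> finite E \<and> E \<subseteq> K \<and> (\<forall>x\<in>E. \<forall>y\<in>E. x \<noteq> y \<longrightarrow> bowen_dist T n x y > \<delta>)" for E
  have P0: "P {}" by (simp add: P_def)
  have Pb: "\<forall>E. P E \<longrightarrow> card E < Suc N"
  proof (intro allI impI)
    fix E assume "P E"
    then have "card E \<le> N" unfolding N_def P_def using K by (intro sep_card[OF U' n]) auto
    then show "card E < Suc N" by simp
  qed
  obtain E where PE: "P E" and Emax: "\<And>E'. P E' \<Longrightarrow> card E' \<le> card E"
    using ex_has_greatest_nat[OF P0 Pb] by blast
  have Ef: "finite E" and EK: "E \<subseteq> K" and Es: "\<forall>x\<in>E. \<forall>y\<in>E. x \<noteq> y \<longrightarrow> bowen_dist T n x y > \<delta>"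
    using PE by (auto simp: P_def)
  have span: "\<exists>x\<in>E. bowen_dist T n x y \<le> \<delta>" if y: "y \<in> K" for y
  proof (rule ccontr)
    assume nc: "\<not> (\<exists>x\<in>E. bowen_dist T n x y \<le> \<delta>)"
    have yE: "y \<notin> E" using nc bowen_self[OF n, of \<delta> y] d(1) by auto
    have "P (insert y E)" unfolding P_def
    proof (intro conjI ballI impI)
      show "finite (insert y E)" using Ef by simp
      show "insert y E \<subseteq> K" using EK y by simp
      fix a b assume ab: "a \<in> insert y E" "b \<in> insert y E" "a \<noteq> b"
      show "\<delta> < bowen_dist T n a b"
      proof (cases "a = y")
        case True
        then have "b \<in> E" using ab by auto
        then show ?thesis using nc True bowen_sym[of n a b] by force
      next
        case False
        then have a: "a \<in> E" using ab by auto
        show ?thesis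
        proof (cases "b = y")
          case True then show ?thesis using nc a by force
        next
          case False then show ?thesis using Es a ab by auto
        qed
      qed
    qed
    then have "card (insert y E) \<le> card E" by (rule Emax)
    then show False using yE Ef by simp
  qed
  define B where "B x = {y\<in>X. \<forall>i<n. dist ((T ^^ i) x) ((T ^^ i) y) \<le> \<delta>}" for x
  have BX: "B x \<subseteq> X" for x by (auto simp: B_def)
  have Bborel: "B x \<in> sets borel" for x
  proof -
    have eq: "B x = X \<inter> (\<Inter>i\<in>{..<n}. X \<inter> (T ^^ i) -` cball ((T ^^ i) x) \<delta>)"
      by (auto simp: B_def mem_cball)
    have ne: "{..<n} \<noteq> {}" using n by (metis lessThan_iff less_le_trans zero_less_one empty_iff)
    have "closedin (top_of_set X) (X \<inter> (\<Inter>i\<in>{..<n}. X \<inter> (T ^^ i) -` cball ((T ^^ i) x) \<delta>))"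
      by (intro closedin_Int closedin_INT[OF ne] continuous_closedin_preimage Tn_cont closed_cball)
        (metis closedin_topspace topspace_euclidean_subtopology)
    then have "closed (B x)" unfolding eq using closedX closedin_closed_trans by blast
    then show ?thesis by (rule borel_closed)
  qed
  have Brefines: "\<exists>J\<in>join_cover X T U n. B x \<subseteq> J" if x: "x \<in> E" for x
  proof -
    have "\<exists>W. W \<in> U \<and> (T ^^ i) ` B x \<subseteq> W" if i: "i < n" for i
    proof -
      have "diameter ((T ^^ i) ` B x) \<le> 2 * \<delta>"
      proof (rule diam_le)
        fix a b assume "a \<in> (T ^^ i) ` B x" "b \<in> (T ^^ i) ` B x"
        then obtain y z where yz: "y \<in> B x" "z \<in> B x" "a = (T ^^ i) y" "b = (T ^^ i) z" by blast
        have "dist ((T ^^ i) x) a \<le> \<delta>" "dist ((T ^^ i) x) b \<le> \<delta>" using yz i by (auto simp: B_def)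
        then show "dist a b \<le> 2 * \<delta>" using dist_triangle[of a b "(T ^^ i) x"]
          by (simp add: dist_commute)
      qed (use d in simp)
      then have "diameter ((T ^^ i) ` B x) < lam" using d by linarith
      moreover have "(T ^^ i) ` B x \<subseteq> X" using BX Tn_in by blast
      ultimately show ?thesis using leb by blast
    qed
    then obtain W where W: "\<And>i. i < n \<Longrightarrow> W i \<in> U \<and> (T ^^ i) ` B x \<subseteq> W i" by metis
    have "X \<inter> (\<Inter>i<n. (T ^^ i) -` W i) \<in> join_cover X T U n"
      unfolding join_cover_def using W by blast
    moreover have "B x \<subseteq> X \<inter> (\<Inter>i<n. (T ^^ i) -` W i)" using W BX by blast
    ultimately show ?thesis by blast
  qed
  define \<V>1 where "\<V>1 = B ` E"
  define \<V>2 where "\<V>2 = (\<lambda>J. J - K) ` join_cover X T U n"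
  have fin1: "finite \<V>1" using Ef by (simp add: \<V>1_def)
  have fin2: "finite \<V>2" using join_finite[OF U] by (simp add: \<V>2_def)
  have V2X: "V \<subseteq> X" if "V \<in> \<V>2" for V using that join_props(3)[OF U] unfolding \<V>2_def by blast
  have V1X: "V \<subseteq> X" if "V \<in> \<V>1" for V using that BX by (auto simp: \<V>1_def)
  have cov: "\<V>1 \<union> \<V>2 \<in> borel_covers X"
    unfolding borel_covers_def
  proof (intro CollectI conjI ballI)
    show "finite (\<V>1 \<union> \<V>2)" using fin1 fin2 by simp
    fix V assume V: "V \<in> \<V>1 \<union> \<V>2"
    then show "V \<subseteq> X" using V1X V2X by blast
    show "V \<in> sets borel"
      using V Bborel join_props(2)[OF U] borel_closed[OF K(2)] by (auto simp: \<V>1_def \<V>2_def)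
  next
    show "\<Union>(\<V>1 \<union> \<V>2) = X"
    proof
      show "\<Union>(\<V>1 \<union> \<V>2) \<subseteq> X" using V1X V2X by blast
      show "X \<subseteq> \<Union>(\<V>1 \<union> \<V>2)"
      proof
        fix y assume y: "y \<in> X"
        show "y \<in> \<Union>(\<V>1 \<union> \<V>2)"
        proof (cases "y \<in> K")
          case True
          then obtain x where x: "x \<in> E" "bowen_dist T n x y \<le> \<delta>" using span by blast
          then have "y \<in> B x" using y by (auto simp: B_def bowen_le_iff[OF n])
          then show ?thesis using x by (auto simp: \<V>1_def)
        next
          case False
          obtain J where "J \<in> join_cover X T U n" "y \<in> J" using join_union[OF U, of n] y by blast
          then show ?thesis using False by (auto simp: \<V>2_def)
        qed
      qed
    qed
  qed
  have ref: "refines (\<V>1 \<union> \<V>2) (join_cover X T U n)"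
    unfolding refines_def \<V>1_def \<V>2_def using Brefines by blast
  have "cover_pressure X T f n U K \<le> sum (gv n K) (\<V>1 \<union> \<V>2)"
    by (rule cover_le[OF cov ref])
  also have "\<dots> = sum (gv n K) \<V>1 + sum (gv n K) \<V>2 - sum (gv n K) (\<V>1 \<inter> \<V>2)"
    using fin1 fin2 by (rule sum_Un)
  also have "\<dots> \<le> sum (gv n K) \<V>1 + sum (gv n K) \<V>2"
  proof -
    have "0 \<le> sum (gv n K) (\<V>1 \<inter> \<V>2)" using V1X by (intro sum_nonneg gv_nonneg) blast
    then show ?thesis by linarith
  qed
  also have "sum (gv n K) \<V>2 = 0"
    by (rule sum.neutral) (auto simp: \<V>2_def gv_def)
  also have "sum (gv n K) \<V>1 \<le> sum (gv n K \<circ> B) E"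
    unfolding \<V>1_def using Ef BX by (intro sum_image_le gv_nonneg)
  also have "\<dots> \<le> (\<Sum>x\<in>E. exp (real n * \<epsilon>) * exp (birkhoff_sum T f n x))"
  proof (rule sum_mono)
    fix x assume x: "x \<in> E"
    then have xX: "x \<in> X" using EK K by auto
    have xB: "x \<in> B x \<inter> K" using xX x EK d(1) by (auto simp: B_def)
    have "Sup ((\<lambda>y. exp (birkhoff_sum T f n y)) ` (B x \<inter> K)) \<le> exp (real n * \<epsilon>) * exp (birkhoff_sum T f n x)"
    proof (rule cSup_least)
      show "(\<lambda>y. exp (birkhoff_sum T f n y)) ` (B x \<inter> K) \<noteq> {}" using xB by blast
      fix s assume "s \<in> (\<lambda>y. exp (birkhoff_sum T f n y)) ` (B x \<inter> K)"
      then obtain y where y: "y \<in> B x" "s = exp (birkhoff_sum T f n y)" by blast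
      have yX: "y \<in> X" using y BX by blast
      have "birkhoff_sum T f n y - birkhoff_sum T f n x = (\<Sum>i<n. f ((T ^^ i) y) - f ((T ^^ i) x))"
        unfolding birkhoff_sum_def by (simp add: sum_subtractf)
      also have "\<dots> \<le> (\<Sum>i<n. \<epsilon>)"
      proof (rule sum_mono)
        fix i assume "i \<in> {..<n}"
        then have "dist ((T ^^ i) y) ((T ^^ i) x) \<le> \<delta>" using y by (auto simp: B_def dist_commute)
        then have "\<bar>f ((T ^^ i) y) - f ((T ^^ i) x)\<bar> \<le> \<epsilon>" using uc Tn_in xX yX by blast
        then show "f ((T ^^ i) y) - f ((T ^^ i) x) \<le> \<epsilon>" by linarith
      qed
      finally have "birkhoff_sum T f n y \<le> real n * \<epsilon> + birkhoff_sum T f n x" by simp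
      then show "s \<le> exp (real n * \<epsilon>) * exp (birkhoff_sum T f n x)"
        unfolding y(2) exp_add[symmetric] by simp
    qed
    then show "(gv n K \<circ> B) x \<le> exp (real n * \<epsilon>) * exp (birkhoff_sum T f n x)"
      using xB by (auto simp: gv_def)
  qed
  also have "\<dots> = exp (real n * \<epsilon>) * (\<Sum>x\<in>E. exp (birkhoff_sum T f n x))"
    by (simp add: sum_distrib_left)
  also have "\<dots> \<le> exp (real n * \<epsilon>) * sep_pressure T f n \<delta> K"
    by (intro mult_left_mono sep_upper[OF d(1) n K(1) Ef EK Es]) simp
  finally show ?thesis by simp
qed

end



context tds begin

lemma main:
  fixes K :: "nat \<Rightarrow> 'a set"
  assumes Kn: "\<forall>n\<ge>1. K n \<subseteq> X \<and> closed (K n) \<and> K n \<noteq> {}"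
  shows "((\<lambda>\<delta>. limsup (\<lambda>n. ereal (ln (sep_pressure T f n \<delta> (K n)) / real n)))
          \<longlongrightarrow> (SUP \<U>\<in>open_covers X.
                 limsup (\<lambda>n. ereal (ln (cover_pressure X T f n \<U> (K n)) / real n))))
         (at_right 0)"
proof -
  define L where "L \<delta> = limsup (\<lambda>n. ereal (ln (sep_pressure T f n \<delta> (K n)) / real n))" for \<delta>
  define A where "A \<U> = limsup (\<lambda>n. ereal (ln (cover_pressure X T f n \<U> (K n)) / real n))" for \<U>
  have KX: "K n \<subseteq> X" "closed (K n)" if "n \<ge> 1" for n using Kn that by auto
  have Kne: "\<exists>x. x \<in> K n" if "n \<ge> 1" for n using Kn that by auto
  have Xne: "X \<noteq> {}" using Kn by fastforce
  have Spos: "sep_pressure T f n \<delta> (K n) > 0" if "n \<ge> 1" "\<delta> > 0" for n \<delta>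
    using Kne[OF that(1)] sep_pos[OF that(2) that(1) KX(1)[OF that(1)]] by blast
  have Cpos: "cover_pressure X T f n \<U> (K n) > 0" if "n \<ge> 1" "\<U> \<in> open_covers X" for n \<U>
    using Kne[OF that(1)] cover_pos[OF that(2) KX(1)[OF that(1)]] by blast
  have fact1: "\<exists>\<U>\<in>open_covers X. L \<delta> \<le> A \<U>" if d: "\<delta> > 0" for \<delta>
  proof -
    obtain U where U: "U \<in> open_covers X" "\<forall>W\<in>U. \<forall>y\<in>W. \<forall>z\<in>W. dist y z \<le> \<delta>"
      using ball_cover[OF d] by blast
    have "L \<delta> \<le> A U" unfolding L_def A_def
    proof (rule Limsup_mono)
      show "\<forall>\<^sub>F n in sequentially. ereal (ln (sep_pressure T f n \<delta> (K n)) / real n)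
              \<le> ereal (ln (cover_pressure X T f n U (K n)) / real n)"
        unfolding eventually_sequentially
      proof (intro exI[of _ 1] allI impI)
        fix n :: nat assume n: "n \<ge> 1"
        have "ln (sep_pressure T f n \<delta> (K n)) \<le> ln (cover_pressure X T f n U (K n))"
          using sep_le_cover[OF U n KX(1)[OF n]] Spos[OF n d] by simp
        then show "ereal (ln (sep_pressure T f n \<delta> (K n)) / real n)
              \<le> ereal (ln (cover_pressure X T f n U (K n)) / real n)"
          by (simp add: divide_right_mono)
      qed
    qed
    then show ?thesis using U by blast
  qed
  have fact2: "\<exists>\<delta>>0. A \<U> \<le> L \<delta> + ereal \<epsilon>" if U: "\<U> \<in> open_covers X" and e: "\<epsilon> > 0" for \<U> \<epsilon>
  proof -
    have "\<forall>W\<in>\<U>. \<exists>Op. open Op \<and> W = X \<inter> Op" using U unfolding open_covers_def openin_open by blast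
    then obtain Op where Op: "\<And>W. W \<in> \<U> \<Longrightarrow> open (Op W) \<and> W = X \<inter> Op W" by metis
    have Une: "\<U> \<noteq> {}" using U Xne unfolding open_covers_def by auto
    have XU: "X \<subseteq> \<Union>(Op ` \<U>)" using U Op unfolding open_covers_def by blast
    obtain lam where lam: "0 < lam" "\<And>S. \<lbrakk>S \<subseteq> X; diameter S < lam\<rbrakk> \<Longrightarrow> \<exists>B \<in> Op ` \<U>. S \<subseteq> B"
      using Lebesgue_number_lemma[OF cX _ XU] Une Op by blast
    have leb: "\<exists>W\<in>\<U>. S \<subseteq> W" if SS: "S \<subseteq> X" "diameter S < lam" for S
    proof -
      obtain W where "W \<in> \<U>" "S \<subseteq> Op W" using lam(2)[OF SS] by blast
      then show ?thesis using Op SS(1) by blast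
    qed
    have "uniformly_continuous_on X f" using compact_uniformly_continuous[OF cf cX] .
    then obtain dd where dd: "dd > 0" "\<And>x x'. x \<in> X \<Longrightarrow> x' \<in> X \<Longrightarrow> dist x' x < dd \<Longrightarrow> dist (f x') (f x) < \<epsilon>"
      unfolding uniformly_continuous_on_def using e by metis
    define \<delta> where "\<delta> = min (lam / 3) (dd / 2)"
    have d: "\<delta> > 0" "2 * \<delta> < lam" using lam dd by (auto simp: \<delta>_def)
    have uc: "\<bar>f x - f y\<bar> \<le> \<epsilon>" if "x \<in> X" "y \<in> X" "dist x y \<le> \<delta>" for x y
    proof -
      have "dist x y < dd" using that(3) dd by (simp add: \<delta>_def)
      then have "dist (f x) (f y) < \<epsilon>" using dd(2)[OF that(2) that(1)] by simp
      then show ?thesis by (simp add: dist_real_def)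
    qed
    have "A \<U> \<le> limsup (\<lambda>n. ereal (ln (sep_pressure T f n \<delta> (K n)) / real n) + ereal \<epsilon>)"
      unfolding A_def
    proof (rule Limsup_mono)
      show "\<forall>\<^sub>F n in sequentially. ereal (ln (cover_pressure X T f n \<U> (K n)) / real n)
              \<le> ereal (ln (sep_pressure T f n \<delta> (K n)) / real n) + ereal \<epsilon>"
        unfolding eventually_sequentially
      proof (intro exI[of _ 1] allI impI)
        fix n :: nat assume n: "n \<ge> 1"
        have le: "cover_pressure X T f n \<U> (K n) \<le> exp (real n * \<epsilon>) * sep_pressure T f n \<delta> (K n)"
          by (rule cover_le_sep[OF U leb uc d n KX[OF n]])
        have "ln (cover_pressure X T f n \<U> (K n)) \<le> ln (exp (real n * \<epsilon>) * sep_pressure T f n \<delta> (K n))"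
          using le Cpos[OF n U] by simp
        also have "\<dots> = real n * \<epsilon> + ln (sep_pressure T f n \<delta> (K n))"
          using Spos[OF n d(1)] by (simp add: ln_mult)
        finally have "ln (cover_pressure X T f n \<U> (K n)) / real n
            \<le> (real n * \<epsilon> + ln (sep_pressure T f n \<delta> (K n))) / real n"
          by (simp add: divide_right_mono)
        also have "\<dots> = ln (sep_pressure T f n \<delta> (K n)) / real n + \<epsilon>"
          using n by (simp add: field_simps)
        finally show "ereal (ln (cover_pressure X T f n \<U> (K n)) / real n)
              \<le> ereal (ln (sep_pressure T f n \<delta> (K n)) / real n) + ereal \<epsilon>" by simp
      qed
    qed
    also have "\<dots> = L \<delta> + ereal \<epsilon>" unfolding L_def
      by (rule Limsup_add_ereal_right) simp_all
    finally show ?thesis using d by blast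
  qed
  have fact3: "L \<delta>2 \<le> L \<delta>1" if d: "0 < \<delta>1" "\<delta>1 \<le> \<delta>2" for \<delta>1 \<delta>2
    unfolding L_def
  proof (rule Limsup_mono)
    show "\<forall>\<^sub>F n in sequentially. ereal (ln (sep_pressure T f n \<delta>2 (K n)) / real n)
              \<le> ereal (ln (sep_pressure T f n \<delta>1 (K n)) / real n)"
      unfolding eventually_sequentially
    proof (intro exI[of _ 1] allI impI)
      fix n :: nat assume n: "n \<ge> 1"
      have "ln (sep_pressure T f n \<delta>2 (K n)) \<le> ln (sep_pressure T f n \<delta>1 (K n))"
        using sep_mono[OF d n KX(1)[OF n]] Spos[OF n] d by simp
      then show "ereal (ln (sep_pressure T f n \<delta>2 (K n)) / real n)
              \<le> ereal (ln (sep_pressure T f n \<delta>1 (K n)) / real n)"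
        by (simp add: divide_right_mono)
    qed
  qed
  define Ls where "Ls = (SUP \<delta>\<in>{0<..}. L \<delta>)"
  have eq: "Ls = (SUP \<U>\<in>open_covers X. A \<U>)"
  proof (rule antisym)
    show "Ls \<le> (SUP \<U>\<in>open_covers X. A \<U>)" unfolding Ls_def
    proof (rule SUP_least)
      fix \<delta> :: real assume "\<delta> \<in> {0<..}"
      then obtain U where "U \<in> open_covers X" "L \<delta> \<le> A U" using fact1 by auto
      then show "L \<delta> \<le> (SUP \<U>\<in>open_covers X. A \<U>)" by (meson SUP_upper order_trans)
    qed
    show "(SUP \<U>\<in>open_covers X. A \<U>) \<le> Ls"
    proof (rule SUP_least)
      fix U assume U: "U \<in> open_covers X"
      show "A U \<le> Ls"
      proof (rule ereal_le_epsilon2)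
        fix e :: real assume e: "0 < e"
        obtain \<delta> where d: "\<delta> > 0" "A U \<le> L \<delta> + ereal e" using fact2[OF U e] by blast
        have "L \<delta> \<le> Ls" unfolding Ls_def using d(1) by (intro SUP_upper) simp
        then show "A U \<le> Ls + ereal e" using d(2) by (meson add_right_mono order_trans)
      qed
    qed
  qed
  have "(L \<longlongrightarrow> Ls) (at_right 0)"
  proof (rule order_tendstoI)
    fix a assume a: "a < Ls"
    then obtain \<delta>0 where d0: "\<delta>0 > 0" "a < L \<delta>0" unfolding Ls_def less_SUP_iff by auto
    show "\<forall>\<^sub>F \<delta> in at_right 0. a < L \<delta>"
      unfolding eventually_at_right_field
    proof (intro exI[of _ \<delta>0] conjI allI impI)
      show "0 < \<delta>0" by fact
      fix \<delta> :: real assume "0 < \<delta>" "\<delta> < \<delta>0"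
      then have "L \<delta>0 \<le> L \<delta>" using fact3 by simp
      then show "a < L \<delta>" using d0 by simp
    qed
  next
    fix a assume a: "Ls < a"
    show "\<forall>\<^sub>F \<delta> in at_right 0. L \<delta> < a"
      using eventually_at_right_less
    proof (rule eventually_mono)
      fix \<delta> :: real assume "0 < \<delta>"
      then have "L \<delta> \<le> Ls" unfolding Ls_def by (intro SUP_upper) simp
      then show "L \<delta> < a" using a by simp
    qed
  qed
  then show ?thesis unfolding eq L_def A_def .
qed

end

theorem lemma3p1:
  fixes X :: "'a::metric_space set" and T :: "'a \<Rightarrow> 'a" and f :: "'a \<Rightarrow> real"
    and K :: "nat \<Rightarrow> 'a set"
  assumes "compact X"
    and "\<exists>g. homeomorphism X X T g"
    and "continuous_on X f"
    and "\<forall>n\<ge>1. K n \<subseteq> X \<and> closed (K n) \<and> K n \<noteq> {}"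
  shows "((\<lambda>\<delta>. limsup (\<lambda>n. ereal (ln (sep_pressure T f n \<delta> (K n)) / real n)))
          \<longlongrightarrow> (SUP \<U>\<in>open_covers X.
                 limsup (\<lambda>n. ereal (ln (cover_pressure X T f n \<U> (K n)) / real n))))
         (at_right 0)"
proof -
  obtain g where h: "homeomorphism X X T g" using assms(2) by blast
  have "tds X T f"
  proof
    show "compact X" by fact
    show "continuous_on X f" by fact
    show "continuous_on X T" using h by (simp add: homeomorphism_def)
    fix x assume "x \<in> X" then show "T x \<in> X" using h by (auto simp: homeomorphism_def)
  qed
  then show ?thesis using tds.main assms(4) by blast
qed

end
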